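(* Let $\tau>0$, $M\in{\rm Sp}(2n,\mathbb{R})$ orthogonal symplectic, $\Lambda\subset\mathbb{R}$ an open interval, and $H:\Lambda\times\mathbb{R}^{2n}\to\mathbb{R}$ continuous with each $H_\lambda$ $M$-invariant, $C^2$, and all partial derivatives continuous in $\lambda$. Let $v_0:\mathbb{R}\to\mathbb{R}^{2n}$ be a nonconstant solution of $$\dot v(t)=J\nabla H_\lambda(v(t)),\quad v(t+\tau)=Mv(t)\ \forall t\in\mathbb{R}\qquad(\ast)$$ for each $\lambda\in\Lambda$. Suppose that for some $\mu\in\Lambda$ there exist $\lambda_k\in\Lambda$, $\lambda_k\to\mu$, and solutions $v_k$ of $(\ast)$ with $\lambda=\lambda_k$, pairwise $\mathbb{R}$-distinct, such that $v_k|_{[0,\tau]}\to v_0|_{[0,\tau]}$ in $W^{1,2}([0,\tau];\mathbb{R}^{2n})$. Then the problem $\dot v(t)=JH''_\mu(v_0(t))v(t)$, $v(t+\tau)=Mv(t)$ $\forall t$, has at least two linearly independent nontrivial solutions, i.e. $\dim{\rm Ker}(\gamma_\mu(\tau)-M)\ge2$, where $\gamma_\lambda$ is the fundamental matrix solution of $\dot Z=JH''_\lambda(v_0(t))Z$, $Z(0)=I_{2n}$.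
   Context: $J=\begin{pmatrix}0&-I_n\\ I_n&0\end{pmatrix}$; ${\rm Sp}(2n,\mathbb{R})=\{M:M^TJM=J\}$; $H_\lambda=H(\lambda,\cdot)$, $M$-invariant meaning $H_\lambda(Mz)=H_\lambda(z)$. Two solutions are $\mathbb{R}$-distinct if they do not lie in the same orbit $\{v(\theta+\cdot):\theta\in\mathbb{R}\}$. *)

theory Defs
  imports "HOL-Analysis.Analysis"
begin

text \<open>R^{2n} is rendered as (real^'n) \<times> (real^'n), z = (x, y).
  The standard complex structure J = [[0,-I],[I,0]] acts by J (x,y) = (-y, x).\<close>

definition Jsymp :: "((real^'n) \<times> (real^'n)) \<Rightarrow> ((real^'n) \<times> (real^'n))" where
  "Jsymp z = (- snd z, fst z)"

text \<open>M in Sp(2n,R): M linear and M^T J M = J, i.e. for all z w: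
  (M z) . J (M w) = z . J w.\<close>

definition symplectic :: "(((real^'n) \<times> (real^'n)) \<Rightarrow> ((real^'n) \<times> (real^'n))) \<Rightarrow> bool" where
  "symplectic M \<longleftrightarrow> linear M \<and> (\<forall>z w. M z \<bullet> Jsymp (M w) = z \<bullet> Jsymp w)"

definition R_distinct :: "(real \<Rightarrow> 'a) \<Rightarrow> (real \<Rightarrow> 'a) \<Rightarrow> bool" where
  "R_distinct u v \<longleftrightarrow> \<not> (\<exists>\<theta>::real. u = (\<lambda>t. v (\<theta> + t)))"

end

theory Submission
  imports Defs
begin

lemma periodic_shift_nat:
  fixes f :: "real \<Rightarrow> 'b"
  assumes "\<And>t. f (t + \<tau>) = f t"
  shows "f (t + real n * \<tau>) = f t"
proof (induction n)
  case 0 then show ?case by simp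
next
  case (Suc n)
  have "f (t + real (Suc n) * \<tau>) = f ((t + real n * \<tau>) + \<tau>)"
    by (simp add: algebra_simps)
  also have "\<dots> = f t" using assms Suc by simp
  finally show ?case .
qed

lemma periodic_reduce:
  fixes f :: "real \<Rightarrow> 'b"
  assumes tau: "\<tau> > 0" and per: "\<And>t. f (t + \<tau>) = f t"
  shows "\<exists>s\<in>{0..\<tau>}. f t = f s"
proof -
  define m where "m = \<lfloor>t / \<tau>\<rfloor>"
  define s where "s = t - real_of_int m * \<tau>"
  have m1: "real_of_int m \<le> t / \<tau>" and m2: "t / \<tau> < real_of_int m + 1"
    unfolding m_def by linarith+
  have "real_of_int m * \<tau> \<le> t" using m1 tau by (simp add: pos_le_divide_eq)
  moreover have "t < (real_of_int m + 1) * \<tau>" using m2 tau by (simp add: pos_divide_less_eq)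
  ultimately have s: "s \<in> {0..\<tau>}" unfolding s_def by (auto simp: algebra_simps)
  have "f t = f s"
  proof (cases "m \<ge> 0")
    case True
    then have "t = s + real (nat m) * \<tau>" unfolding s_def by simp
    then show ?thesis using periodic_shift_nat[of f \<tau> s "nat m", OF per] by simp
  next
    case False
    then have "s = t + real (nat (-m)) * \<tau>" unfolding s_def by simp
    then show ?thesis using periodic_shift_nat[of f \<tau> t "nat (-m)", OF per] by simp
  qed
  with s show ?thesis by blast
qed

lemma qp_norm_reduce:
  fixes u :: "real \<Rightarrow> 'a::euclidean_space"
  assumes "orthogonal_transformation M" "\<tau> > 0" "\<And>t. u (t + \<tau>) = M (u t)"
  shows "\<exists>s\<in>{0..\<tau>}. norm (u t) = norm (u s)"
  using periodic_reduce[of \<tau> "\<lambda>t. norm (u t)" t] assms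
  by (simp add: orthogonal_transformation_norm)

lemma gronwall_sq:
  fixes \<phi> \<phi>' :: "real \<Rightarrow> 'a::real_inner"
  assumes der: "\<And>t. t \<in> {a..b} \<Longrightarrow> (\<phi> has_vector_derivative \<phi>' t) (at t)"
    and bnd: "\<And>t. t \<in> {a..b} \<Longrightarrow> norm (\<phi>' t) \<le> C * norm (\<phi> t) + D"
    and C: "C \<ge> 0" and D: "D \<ge> 0" and t: "t \<in> {a..b}"
  shows "(norm (\<phi> t))\<^sup>2 \<le> exp ((2*C+1)*(t-a)) * ((norm (\<phi> a))\<^sup>2 + D\<^sup>2)"
proof -
  define \<alpha> where "\<alpha> = 2*C+1"
  have al: "\<alpha> \<ge> 1" using C unfolding \<alpha>_def by simp
  define G where "G s = exp (-\<alpha>*(s-a)) * (\<phi> s \<bullet> \<phi> s + D\<^sup>2)" for s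
  have "G t \<le> G a"
  proof (rule DERIV_nonpos_imp_nonincreasing[of a t G])
    show "a \<le> t" using t by simp
    fix x assume x: "a \<le> x" "x \<le> t"
    then have xab: "x \<in> {a..b}" using t by simp
    have d1: "((\<lambda>s. \<phi> s \<bullet> \<phi> s) has_real_derivative (2 * (\<phi> x \<bullet> \<phi>' x))) (at x)"
    proof -
      have "((\<lambda>s. \<phi> s \<bullet> \<phi> s) has_derivative (\<lambda>h. \<phi> x \<bullet> (h *\<^sub>R \<phi>' x) + (h *\<^sub>R \<phi>' x) \<bullet> \<phi> x)) (at x)"
        using der[OF xab] unfolding has_vector_derivative_def
        by (rule has_derivative_inner[OF _ ]) (use der[OF xab] in \<open>simp add: has_vector_derivative_def\<close>)
      then have "((\<lambda>s. \<phi> s \<bullet> \<phi> s) has_derivative (\<lambda>h. h * (2 * (\<phi> x \<bullet> \<phi>' x)))) (at x)"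
        by (simp add: inner_commute algebra_simps)
      moreover have "(\<lambda>h. h * (2 * (\<phi> x \<bullet> \<phi>' x))) = (*) (2 * (\<phi> x \<bullet> \<phi>' x))"
        by (rule ext) (simp only: mult.commute)
      ultimately show ?thesis
        unfolding has_field_derivative_def by simp
    qed
    have "(G has_real_derivative
        (-\<alpha>) * exp (-\<alpha>*(x-a)) * (\<phi> x \<bullet> \<phi> x + D\<^sup>2) + exp (-\<alpha>*(x-a)) * (2 * (\<phi> x \<bullet> \<phi>' x))) (at x)"
      unfolding G_def
      by (auto intro!: derivative_eq_intros d1)
    moreover
    have "2 * (\<phi> x \<bullet> \<phi>' x) \<le> \<alpha> * (\<phi> x \<bullet> \<phi> x + D\<^sup>2)"
    proof -
      have "\<phi> x \<bullet> \<phi>' x \<le> norm (\<phi> x) * norm (\<phi>' x)" by (rule norm_cauchy_schwarz)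
      also have "\<dots> \<le> norm (\<phi> x) * (C * norm (\<phi> x) + D)"
        by (rule mult_left_mono[OF bnd[OF xab]]) simp
      finally have 1: "\<phi> x \<bullet> \<phi>' x \<le> C * (norm (\<phi> x))\<^sup>2 + norm (\<phi> x) * D"
        by (simp add: algebra_simps power2_eq_square)
      have 2: "2 * (norm (\<phi> x) * D) \<le> (norm (\<phi> x))\<^sup>2 + D\<^sup>2"
        using sum_squares_bound[of "norm (\<phi> x)" D] by (simp add: algebra_simps)
      have 3: "\<phi> x \<bullet> \<phi> x = (norm (\<phi> x))\<^sup>2" by (simp add: power2_norm_eq_inner)
      have "D\<^sup>2 \<le> \<alpha> * D\<^sup>2" using al by (simp add: mult_le_cancel_right1)
      then show ?thesis using 1 2 3 unfolding \<alpha>_def by (simp add: algebra_simps)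
    qed
    then have "(-\<alpha>) * exp (-\<alpha>*(x-a)) * (\<phi> x \<bullet> \<phi> x + D\<^sup>2) + exp (-\<alpha>*(x-a)) * (2 * (\<phi> x \<bullet> \<phi>' x)) \<le> 0"
    proof -
      assume h: "2 * (\<phi> x \<bullet> \<phi>' x) \<le> \<alpha> * (\<phi> x \<bullet> \<phi> x + D\<^sup>2)"
      have "exp (-\<alpha>*(x-a)) * (2 * (\<phi> x \<bullet> \<phi>' x)) \<le> exp (-\<alpha>*(x-a)) * (\<alpha> * (\<phi> x \<bullet> \<phi> x + D\<^sup>2))"
        by (rule mult_left_mono[OF h]) simp
      then show ?thesis by (simp add: algebra_simps)
    qed
    ultimately show "\<exists>y. (G has_real_derivative y) (at x) \<and> y \<le> 0" by blast
  qed
  then have "exp (-\<alpha>*(t-a)) * ((norm (\<phi> t))\<^sup>2 + D\<^sup>2) \<le> (norm (\<phi> a))\<^sup>2 + D\<^sup>2"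
    unfolding G_def by (simp add: power2_norm_eq_inner)
  then have "(norm (\<phi> t))\<^sup>2 + D\<^sup>2 \<le> exp (\<alpha>*(t-a)) * ((norm (\<phi> a))\<^sup>2 + D\<^sup>2)"
  proof -
    assume h: "exp (-\<alpha>*(t-a)) * ((norm (\<phi> t))\<^sup>2 + D\<^sup>2) \<le> (norm (\<phi> a))\<^sup>2 + D\<^sup>2"
    have e1: "exp (\<alpha>*(t-a)) * exp (-\<alpha>*(t-a)) = 1" by (simp add: exp_add[symmetric])
    have "(norm (\<phi> t))\<^sup>2 + D\<^sup>2 = exp (\<alpha>*(t-a)) * (exp (-\<alpha>*(t-a)) * ((norm (\<phi> t))\<^sup>2 + D\<^sup>2))"
      by (simp only: mult.assoc[symmetric] e1 mult_1_left)
    also have "\<dots> \<le> exp (\<alpha>*(t-a)) * ((norm (\<phi> a))\<^sup>2 + D\<^sup>2)"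
      by (rule mult_left_mono[OF h]) simp
    finally show ?thesis .
  qed
  then show ?thesis unfolding \<alpha>_def by (smt (verit) zero_le_power2)
qed

lemma lipschitz_from_Df:
  fixes f :: "'a::euclidean_space \<Rightarrow> 'b::real_normed_vector" and Df :: "'a \<Rightarrow> 'a \<Rightarrow>\<^sub>L 'b"
  assumes fd: "\<And>x. (f has_derivative blinfun_apply (Df x)) (at x)"
    and Dc: "continuous_on UNIV Df"
  obtains L where "L \<ge> 0" "\<And>a b. a \<in> cball 0 R \<Longrightarrow> b \<in> cball 0 R \<Longrightarrow> norm (f a - f b) \<le> L * norm (a - b)"
proof -
  have "compact (Df ` cball 0 R)"
    by (rule compact_continuous_image[OF continuous_on_subset[OF Dc]]) auto
  then obtain B where B: "B > 0" "\<And>x. x \<in> cball 0 R \<Longrightarrow> norm (Df x) \<le> B"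
    using compact_imp_bounded bounded_pos by (metis image_eqI)
  have "norm (f a - f b) \<le> B * norm (a - b)" if "a \<in> cball 0 R" "b \<in> cball 0 R" for a b
    by (rule differentiable_bound[of "cball 0 R" f "\<lambda>x. blinfun_apply (Df x)" B])
       (use that B fd in \<open>auto intro: has_derivative_at_withinI simp: norm_blinfun.rep_eq[symmetric]\<close>)
  then show ?thesis using that[of B] B by auto
qed

lemma ode_unique_fwd:
  fixes \<phi> \<phi>' :: "real \<Rightarrow> 'a::real_inner"
  assumes der: "\<And>t. (\<phi> has_vector_derivative \<phi>' t) (at t)"
    and bnd: "\<And>t. norm (\<phi>' t) \<le> L * norm (\<phi> t)" and L: "L \<ge> 0"
    and z: "\<phi> t0 = 0"
  shows "\<phi> t = 0"
proof (cases "t0 \<le> t")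
  case True
  have "(norm (\<phi> t))\<^sup>2 \<le> exp ((2*L+1)*(t-t0)) * ((norm (\<phi> t0))\<^sup>2 + 0\<^sup>2)"
    by (rule gronwall_sq[of t0 t \<phi> \<phi>' L 0]) (use der bnd L True in auto)
  then show ?thesis using z by simp
next
  case False
  define \<psi> where "\<psi> s = \<phi> (-s)" for s
  have d: "(\<psi> has_vector_derivative - \<phi>' (-s)) (at s)" for s
  proof -
    have "((\<phi> \<circ> uminus) has_vector_derivative (-1) *\<^sub>R \<phi>' (-s)) (at s)"
      by (rule vector_diff_chain_at) (auto intro!: derivative_eq_intros der)
    then show ?thesis unfolding \<psi>_def o_def by simp
  qed
  have "(norm (\<psi> (-t)))\<^sup>2 \<le> exp ((2*L+1)*((-t)-(-t0))) * ((norm (\<psi> (-t0)))\<^sup>2 + 0\<^sup>2)"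
    by (rule gronwall_sq[of "-t0" "-t" \<psi> "\<lambda>s. - \<phi>' (-s)" L 0]) (use d bnd L False in \<open>auto simp: \<psi>_def\<close>)
  then show ?thesis using z by (simp add: \<psi>_def)
qed

lemma ode_unique:
  fixes f :: "'a::euclidean_space \<Rightarrow> 'a" and Df :: "'a \<Rightarrow> 'a \<Rightarrow>\<^sub>L 'a"
  assumes fd: "\<And>x. (f has_derivative blinfun_apply (Df x)) (at x)"
    and Dc: "continuous_on UNIV Df"
    and y: "\<And>t. (y has_vector_derivative f (y t)) (at t)"
    and z: "\<And>t. (z has_vector_derivative f (z t)) (at t)"
    and Ry: "\<And>t. norm (y t) \<le> R" and Rz: "\<And>t. norm (z t) \<le> R"
    and eq: "y t0 = z t0"
  shows "y t = z t"
proof -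
  obtain L where L: "L \<ge> 0" "\<And>a b. a \<in> cball 0 R \<Longrightarrow> b \<in> cball 0 R \<Longrightarrow> norm (f a - f b) \<le> L * norm (a - b)"
    using lipschitz_from_Df[OF fd Dc] by blast
  have d: "((\<lambda>t. y t - z t) has_vector_derivative f (y t) - f (z t)) (at t)" for t
    using y[of t] z[of t] by (rule has_vector_derivative_diff)
  have b: "norm (f (y t) - f (z t)) \<le> L * norm (y t - z t)" for t
    using L(2) Ry Rz by auto
  have "y t - z t = 0"
    using ode_unique_fwd[where \<phi> = "\<lambda>t. y t - z t" and \<phi>' = "\<lambda>t. f (y t) - f (z t)", OF d b L(1)] eq
    by simp
  then show ?thesis by simp
qed

lemma norm_sq_vector_derivative:
  fixes u :: "real \<Rightarrow> 'a::real_inner"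
  assumes "(u has_vector_derivative u') (at x)"
  shows "((\<lambda>s. (norm (u s))\<^sup>2) has_vector_derivative (2 * (u x \<bullet> u'))) (at x)"
proof -
  have "((\<lambda>s. u s \<bullet> u s) has_derivative (\<lambda>h. u x \<bullet> (h *\<^sub>R u') + (h *\<^sub>R u') \<bullet> u x)) (at x)"
    using assms unfolding has_vector_derivative_def
    by (rule has_derivative_inner[OF _ ]) (use assms in \<open>simp add: has_vector_derivative_def\<close>)
  then have "((\<lambda>s. u s \<bullet> u s) has_derivative (\<lambda>h. h *\<^sub>R (2 * (u x \<bullet> u')))) (at x)"
    by (simp add: inner_commute algebra_simps)
  then show ?thesis unfolding has_vector_derivative_def by (simp add: power2_norm_eq_inner)
qed

lemma w12_sup:
  fixes u u' :: "real \<Rightarrow> 'a::euclidean_space"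
  assumes tau: "\<tau> > 0" and der: "\<And>t. (u has_vector_derivative u' t) (at t)"
    and cu': "continuous_on {0..\<tau>} u'" and t: "t \<in> {0..\<tau>}"
  shows "(norm (u t))\<^sup>2 \<le> (1/\<tau> + 1) * (integral {0..\<tau>} (\<lambda>t. (norm (u t))\<^sup>2) + integral {0..\<tau>} (\<lambda>t. (norm (u' t))\<^sup>2))"
proof -
  define g where "g s = (norm (u s))\<^sup>2" for s
  define g' where "g' s = 2 * (u s \<bullet> u' s)" for s
  define h where "h s = (norm (u s))\<^sup>2 + (norm (u' s))\<^sup>2" for s
  define a where "a = integral {0..\<tau>} g"
  define b where "b = integral {0..\<tau>} (\<lambda>t. (norm (u' t))\<^sup>2)"
  have cu: "continuous_on {0..\<tau>} u"
    using der by (intro continuous_at_imp_continuous_on) (auto intro: has_vector_derivative_continuous)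
  have cg: "continuous_on {0..\<tau>} g" unfolding g_def by (intro continuous_intros cu)
  have cg': "continuous_on {0..\<tau>} g'" unfolding g'_def by (intro continuous_intros cu cu')
  have cu'2: "continuous_on {0..\<tau>} (\<lambda>t. (norm (u' t))\<^sup>2)" by (intro continuous_intros cu')
  have ch: "continuous_on {0..\<tau>} h" unfolding h_def by (intro continuous_intros cu cu')
  have dg: "(g has_vector_derivative g' s) (at s)" for s
    unfolding g_def g'_def by (rule norm_sq_vector_derivative[OF der])
  have gh: "norm (g' s) \<le> h s" for s
  proof -
    have "\<bar>u s \<bullet> u' s\<bar> \<le> norm (u s) * norm (u' s)" by (rule Cauchy_Schwarz_ineq2)
    moreover have "2 * (norm (u s) * norm (u' s)) \<le> (norm (u s))\<^sup>2 + (norm (u' s))\<^sup>2"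
      using sum_squares_bound[of "norm (u s)" "norm (u' s)"] by (simp add: algebra_simps)
    ultimately show ?thesis unfolding g'_def h_def by simp
  qed
  have a0: "a \<ge> 0" unfolding a_def
    by (rule integral_nonneg) (auto intro: integrable_continuous_interval cg simp: g_def)
  have b0: "b \<ge> 0" unfolding b_def
    by (rule integral_nonneg) (auto intro: integrable_continuous_interval cu'2)
  have hab: "integral {0..\<tau>} h = a + b"
  proof -
    have "h = (\<lambda>s. g s + (norm (u' s))\<^sup>2)" unfolding h_def g_def by simp
    then show ?thesis unfolding a_def b_def
      by (simp add: integral_add integrable_continuous_interval cu'2 cg)
  qed
  have diff: "g q - g p \<le> a + b" if pq: "p \<in> {0..\<tau>}" "q \<in> {0..\<tau>}" for p q
  proof -
    have key: "norm (g y - g x) \<le> a + b" if xy: "x \<le> y" "x \<in> {0..\<tau>}" "y \<in> {0..\<tau>}" for x y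
    proof -
      have sub: "{x..y} \<subseteq> {0..\<tau>}" using xy by auto
      have I: "(g' has_integral g y - g x) {x..y}"
        by (rule fundamental_theorem_of_calculus[OF xy(1)])
           (auto intro: has_vector_derivative_at_within dg)
      have "norm (g y - g x) = norm (integral {x..y} g')" using I by (simp add: integral_unique)
      also have "\<dots> \<le> integral {x..y} h"
        by (rule integral_norm_bound_integral)
           (use I in \<open>auto intro: integrable_continuous_interval continuous_on_subset[OF ch sub] gh[simplified]\<close>)
      also have "\<dots> \<le> integral {0..\<tau>} h"
        by (rule integral_subset_le[OF sub])
           (auto intro: integrable_continuous_interval continuous_on_subset[OF ch sub] ch simp: h_def)
      finally show ?thesis using hab by simp
    qed
    show ?thesis
    proof (cases "p \<le> q")
      case True then show ?thesis using key[of p q] pq by simp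
    next
      case False then show ?thesis using key[of q p] pq by (simp add: norm_minus_commute)
    qed
  qed
  obtain s where s: "s \<in> {0..\<tau>}" "\<And>x. x \<in> {0..\<tau>} \<Longrightarrow> g s \<le> g x"
    using continuous_attains_inf[OF compact_Icc _ cg] tau by fastforce
  have "integral {0..\<tau>} (\<lambda>x. g s) \<le> a"
    unfolding a_def
    by (rule integral_le) (auto intro: integrable_continuous_interval cg s(2))
  then have "\<tau> * g s \<le> a" using tau by simp
  then have gs: "g s \<le> a / \<tau>" using tau by (simp add: field_simps)
  have "g t \<le> a / \<tau> + a + b" using diff[OF s(1) t] gs by simp
  also have "\<dots> \<le> (1/\<tau> + 1) * (a + b)"
    using a0 b0 tau by (simp add: field_simps)
  finally show ?thesis unfolding g_def a_def b_def .
qed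

lemma limit_solution:
  fixes A :: "real \<Rightarrow> 'a::euclidean_space \<Rightarrow>\<^sub>L 'a" and z r :: "nat \<Rightarrow> real \<Rightarrow> 'a" and M :: "'a \<Rightarrow> 'a"
  assumes tau: "\<tau> > 0" and M: "orthogonal_transformation M"
    and KA: "\<And>t. norm (A t) \<le> KA"
    and zd: "\<And>k t. (z k has_vector_derivative (A t (z k t) + r k t)) (at t)"
    and zp: "\<And>k t. z k (t + \<tau>) = M (z k t)"
    and z0: "\<And>k. norm (z k 0) = 1"
    and rb: "\<And>\<eta>. \<eta> > 0 \<Longrightarrow> \<forall>\<^sub>F k in sequentially. \<forall>t. norm (r k t) \<le> \<eta> * norm (z k t)"
  shows "\<exists>w. (\<forall>t. (w has_vector_derivative A t (w t)) (at t)) \<and> (\<forall>t. w (t + \<tau>) = M (w t))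
             \<and> (\<exists>s. strict_mono s \<and> (\<lambda>k. z (s k) 0) \<longlonglongrightarrow> w 0)"
proof -
  have KA0: "KA \<ge> 0" using KA[of 0] norm_ge_zero order_trans by blast
  have Mlin: "linear M" using M by (simp add: orthogonal_transformation_def)
  have Mbl: "bounded_linear M" using Mlin by (simp add: linear_conv_bounded_linear)
  have Anorm: "norm (A t x) \<le> KA * norm x" for t x
    using norm_blinfun[of "A t" x] KA[of t] by (meson mult_right_mono norm_ge_zero order_trans)
  obtain N1 where N1: "\<And>k t. k \<ge> N1 \<Longrightarrow> norm (r k t) \<le> 1 * norm (z k t)"
    using rb[of 1] unfolding eventually_sequentially by auto
  define W where "W = sqrt (exp ((2*(KA+1)+1)*\<tau>))"
  have W0: "W \<ge> 0" unfolding W_def by simp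
  have zW: "norm (z k t) \<le> W" if k: "k \<ge> N1" for k t
  proof -
    have "norm (z k s) \<le> W" if s: "s \<in> {0..\<tau>}" for s
    proof -
      have "(norm (z k s))\<^sup>2 \<le> exp ((2*(KA+1)+1)*(s-0)) * ((norm (z k 0))\<^sup>2 + 0\<^sup>2)"
      proof (rule gronwall_sq[of 0 \<tau> "z k" "\<lambda>t. A t (z k t) + r k t" "KA+1" 0 s])
        fix t assume "t \<in> {0..\<tau>}"
        have "norm (A t (z k t) + r k t) \<le> KA * norm (z k t) + 1 * norm (z k t)"
          using norm_triangle_le[OF add_mono[OF Anorm N1[OF k]]] by simp
        then show "norm (A t (z k t) + r k t) \<le> (KA + 1) * norm (z k t) + 0"
          by (simp add: algebra_simps)
      qed (use zd KA0 s in auto)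
      also have "\<dots> \<le> exp ((2*(KA+1)+1)*\<tau>)"
        using z0[of k] s KA0 by (simp add: mult_left_mono)
      finally show ?thesis unfolding W_def by (rule real_le_rsqrt)
    qed
    moreover obtain s where "s \<in> {0..\<tau>}" "norm (z k t) = norm (z k s)"
      using qp_norm_reduce[where u="z k", OF M tau zp] by blast
    ultimately show ?thesis by simp
  qed
  have "seq_compact (sphere (0::'a) 1)"
    by (rule compact_imp_seq_compact) simp
  then obtain l s where l: "l \<in> sphere 0 1" and s: "strict_mono s"
    and sl: "((\<lambda>k. z k 0) \<circ> s) \<longlonglongrightarrow> l"
    by (rule seq_compactE) (use z0 in auto)
  define y where "y k = z (s k)" for k
  define q where "q k = r (s k)" for k
  define y' where "y' k t = A t (y k t) + q k t" for k t
  have sk: "s k \<ge> k" for k using s by (rule seq_suble)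
  have y0: "(\<lambda>k. y k 0) \<longlonglongrightarrow> l" using sl by (simp add: y_def o_def)
  have yd: "(y k has_vector_derivative y' k t) (at t)" for k t
    unfolding y_def y'_def q_def by (rule zd)
  have yW: "norm (y k t) \<le> W" if "k \<ge> N1" for k t
    unfolding y_def using zW sk that le_trans by blast
  define E1 where "E1 = exp ((2*KA+1)*\<tau>)"
  define Q where "Q = KA * sqrt (E1 * (1 + 4*W\<^sup>2)) + 2*W"
  have Q0: "Q \<ge> 0" unfolding Q_def using KA0 W0 by (intro add_nonneg_nonneg mult_nonneg_nonneg real_sqrt_ge_zero) (auto simp: E1_def)
  have cauchy: "\<exists>N. \<forall>m\<ge>N. \<forall>n\<ge>N. \<forall>t. norm (y' m t - y' n t) \<le> e" if e: "e > 0" for e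
  proof -
    define \<epsilon> where "\<epsilon> = e / (Q + 1)"
    have eps: "\<epsilon> > 0" unfolding \<epsilon>_def using e Q0 by simp
    have epsQ: "\<epsilon> * Q \<le> e" unfolding \<epsilon>_def using e Q0 by (simp add: field_simps)
    obtain N2 where N2: "\<And>k t. k \<ge> N2 \<Longrightarrow> norm (r k t) \<le> \<epsilon> * norm (z k t)"
      using rb[OF eps] unfolding eventually_sequentially by auto
    obtain N3 where N3: "\<And>m n. m \<ge> N3 \<Longrightarrow> n \<ge> N3 \<Longrightarrow> dist (y m 0) (y n 0) < \<epsilon>"
      using LIMSEQ_imp_Cauchy[OF y0] eps unfolding Cauchy_def by blast
    define N where "N = max N1 (max N2 N3)"
    have "\<forall>m\<ge>N. \<forall>n\<ge>N. \<forall>t. norm (y' m t - y' n t) \<le> e"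
    proof (intro allI impI)
      fix m n t assume mn: "m \<ge> N" "n \<ge> N"
      have qb: "norm (q k t) \<le> \<epsilon> * W" if "k \<ge> N" for k t
      proof -
        have "norm (q k t) \<le> \<epsilon> * norm (y k t)"
          unfolding q_def y_def using N2 sk that unfolding N_def by (meson le_trans max.boundedE)
        also have "\<dots> \<le> \<epsilon> * W" using yW[of k t] that eps unfolding N_def by simp
        finally show ?thesis .
      qed
      define d where "d t = y m t - y n t" for t
      have dd: "(d has_vector_derivative (A t (d t) + (q m t - q n t))) (at t)" for t
      proof -
        have "(d has_vector_derivative y' m t - y' n t) (at t)"
          unfolding d_def by (rule has_vector_derivative_diff[OF yd yd])
        moreover have "y' m t - y' n t = A t (d t) + (q m t - q n t)"
          unfolding y'_def d_def by (simp add: blinfun.diff_right algebra_simps)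
        ultimately show ?thesis by simp
      qed
      have qmn: "norm (q m t - q n t) \<le> 2 * \<epsilon> * W" for t
        using norm_triangle_ineq4[of "q m t" "q n t"] qb[OF mn(1), of t] qb[OF mn(2), of t] by simp
      have dbound: "norm (A t (d t) + (q m t - q n t)) \<le> KA * norm (d t) + 2 * \<epsilon> * W" for t
        using norm_triangle_le[OF add_mono[OF Anorm qmn]] by simp
      have d0: "norm (d 0) \<le> \<epsilon>"
        using N3[of m n] mn unfolding d_def N_def by (simp add: dist_norm)
      have dper: "d (t + \<tau>) = M (d t)" for t
        unfolding d_def y_def using zp linear_diff[OF Mlin] by simp
      have dsmall: "norm (d t) \<le> \<epsilon> * sqrt (E1 * (1 + 4*W\<^sup>2))" for t
      proof -
        have "norm (d s') \<le> \<epsilon> * sqrt (E1 * (1 + 4*W\<^sup>2))" if s': "s' \<in> {0..\<tau>}" for s'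
        proof -
          have "(norm (d s'))\<^sup>2 \<le> exp ((2*KA+1)*(s'-0)) * ((norm (d 0))\<^sup>2 + (2*\<epsilon>*W)\<^sup>2)"
            by (rule gronwall_sq[of 0 \<tau> d "\<lambda>t. A t (d t) + (q m t - q n t)" KA "2*\<epsilon>*W" s'])
               (use dd dbound KA0 eps W0 s' in auto)
          also have "\<dots> \<le> E1 * (\<epsilon>\<^sup>2 + (2*\<epsilon>*W)\<^sup>2)"
          proof (rule mult_mono)
            show "exp ((2*KA+1)*(s'-0)) \<le> E1" unfolding E1_def using s' KA0 by (simp add: mult_left_mono)
            show "(norm (d 0))\<^sup>2 + (2*\<epsilon>*W)\<^sup>2 \<le> \<epsilon>\<^sup>2 + (2*\<epsilon>*W)\<^sup>2"
              using d0 by (simp add: power_mono)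
          qed (auto simp: E1_def)
          also have "\<dots> = (\<epsilon> * sqrt (E1 * (1 + 4*W\<^sup>2)))\<^sup>2"
            using eps by (simp add: power_mult_distrib E1_def algebra_simps)
          finally show ?thesis
            by (rule power2_le_imp_le) (use eps in \<open>auto simp: E1_def intro!: mult_nonneg_nonneg\<close>)
        qed
        moreover obtain s' where "s' \<in> {0..\<tau>}" "norm (d t) = norm (d s')"
          using qp_norm_reduce[where u=d, OF M tau dper] by blast
        ultimately show ?thesis by simp
      qed
      have "y' m t - y' n t = A t (d t) + (q m t - q n t)"
        unfolding y'_def d_def by (simp add: blinfun.diff_right algebra_simps)
      then have "norm (y' m t - y' n t) \<le> KA * norm (d t) + 2 * \<epsilon> * W"
        using dbound by simp
      also have "\<dots> \<le> KA * (\<epsilon> * sqrt (E1 * (1 + 4*W\<^sup>2))) + 2 * \<epsilon> * W"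
        using dsmall[of t] KA0 by (simp add: mult_left_mono)
      also have "\<dots> = \<epsilon> * Q" unfolding Q_def by (simp add: algebra_simps)
      also have "\<dots> \<le> e" by (rule epsQ)
      finally show "norm (y' m t - y' n t) \<le> e" .
    qed
    then show ?thesis by blast
  qed
  have conv: "convergent (\<lambda>m. y' m t)" for t
  proof -
    have "Cauchy (\<lambda>m. y' m t)"
    proof (rule metric_CauchyI)
      fix e :: real assume "e > 0"
      then obtain N where "\<forall>m\<ge>N. \<forall>n\<ge>N. \<forall>t. norm (y' m t - y' n t) \<le> e/2"
        using cauchy[of "e/2"] by auto
      then show "\<exists>M. \<forall>m\<ge>M. \<forall>n\<ge>M. dist (y' m t) (y' n t) < e"
        using \<open>e > 0\<close> by (metis dist_norm field_sum_of_halves less_add_same_cancel1 half_gt_zero le_less_trans)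
    qed
    then show ?thesis by (simp add: Cauchy_convergent_iff)
  qed
  define D where "D t = lim (\<lambda>m. y' m t)" for t
  have yD: "(\<lambda>m. y' m t) \<longlonglongrightarrow> D t" for t
    unfolding D_def using conv[of t] by (simp add: convergent_LIMSEQ_iff)
  have unif: "\<exists>N. \<forall>m\<ge>N. \<forall>t. norm (y' m t - D t) \<le> e" if e: "e > 0" for e
  proof -
    obtain N where N: "\<forall>m\<ge>N. \<forall>n\<ge>N. \<forall>t. norm (y' m t - y' n t) \<le> e"
      using cauchy[OF e] by blast
    have "norm (y' m t - D t) \<le> e" if m: "m \<ge> N" for m t
    proof (rule tendsto_upperbound)
      show "((\<lambda>n. norm (y' m t - y' n t)) \<longlongrightarrow> norm (y' m t - D t)) sequentially"
        by (intro tendsto_intros yD)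
      show "\<forall>\<^sub>F n in sequentially. norm (y' m t - y' n t) \<le> e"
        unfolding eventually_sequentially using N m by blast
    qed simp
    then show ?thesis by blast
  qed
  have "\<exists>g. \<forall>x\<in>UNIV. (\<lambda>n. y n x) \<longlonglongrightarrow> g x \<and> (g has_derivative (\<lambda>h. h *\<^sub>R D x)) (at x within UNIV)"
  proof (rule has_derivative_sequence[of UNIV y "\<lambda>n x h. h *\<^sub>R y' n x" "\<lambda>x h. h *\<^sub>R D x" 0 l])
    show "\<And>n x. x \<in> UNIV \<Longrightarrow> (y n has_derivative (\<lambda>h. h *\<^sub>R y' n x)) (at x within UNIV)"
      using yd unfolding has_vector_derivative_def by simp
    fix e :: real assume e: "e > 0"
    then obtain N where N: "\<forall>m\<ge>N. \<forall>t. norm (y' m t - D t) \<le> e" using unif by blast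
    show "\<forall>\<^sub>F n in sequentially. \<forall>x\<in>UNIV. \<forall>h. norm (h *\<^sub>R y' n x - h *\<^sub>R D x) \<le> e * norm h"
      unfolding eventually_sequentially
    proof (intro exI allI impI ballI)
      fix n x h assume "N \<le> n"
      then have "norm (y' n x - D x) \<le> e" using N by blast
      then have "\<bar>h\<bar> * norm (y' n x - D x) \<le> \<bar>h\<bar> * e" by (simp add: mult_left_mono)
      then show "norm (h *\<^sub>R y' n x - h *\<^sub>R D x) \<le> e * norm h"
        by (simp add: scaleR_diff_right[symmetric] mult.commute)
    qed
  qed (use y0 in auto)
  then obtain g where g: "\<And>x. (\<lambda>n. y n x) \<longlonglongrightarrow> g x" "\<And>x. (g has_derivative (\<lambda>h. h *\<^sub>R D x)) (at x)"
    by auto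
  have q0: "(\<lambda>m. q m t) \<longlonglongrightarrow> 0" for t
  proof (rule LIMSEQ_I)
    fix e :: real assume e: "e > 0"
    define \<eta> where "\<eta> = e / (W + 1)"
    have eta: "\<eta> > 0" unfolding \<eta>_def using e W0 by simp
    have etaW: "\<eta> * W < e" unfolding \<eta>_def using e W0 by (simp add: field_simps)
    obtain N2 where N2: "\<And>k t. k \<ge> N2 \<Longrightarrow> norm (r k t) \<le> \<eta> * norm (z k t)"
      using rb[OF eta] unfolding eventually_sequentially by auto
    show "\<exists>no. \<forall>n\<ge>no. norm (q n t - 0) < e"
    proof (intro exI allI impI)
      fix n assume n: "max N1 N2 \<le> n"
      have "norm (q n t) \<le> \<eta> * norm (y n t)"
        unfolding q_def y_def using N2 sk n by (meson le_trans max.boundedE)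
      also have "\<dots> \<le> \<eta> * W" using yW[of n t] n eta by (simp add: mult_left_mono)
      finally show "norm (q n t - 0) < e" using etaW by simp
    qed
  qed
  have DA: "D t = A t (g t)" for t
  proof -
    have "(\<lambda>m. y' m t) \<longlonglongrightarrow> A t (g t) + 0"
      unfolding y'_def
      by (intro tendsto_add q0 bounded_linear.tendsto[OF blinfun.bounded_linear_right] g)
    then show ?thesis using yD[of t] LIMSEQ_unique by auto
  qed
  have gp: "g (t + \<tau>) = M (g t)" for t
  proof -
    have "(\<lambda>m. y m (t + \<tau>)) \<longlonglongrightarrow> M (g t)"
      unfolding y_def zp by (rule bounded_linear.tendsto[OF Mbl g(1)[unfolded y_def]])
    then show ?thesis using g(1)[of "t + \<tau>"] LIMSEQ_unique by auto
  qed
  have gd: "(g has_vector_derivative A t (g t)) (at t)" for t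
    using g(2)[of t] DA[of t] unfolding has_vector_derivative_def by simp
  have "(\<lambda>k. z (s k) 0) \<longlonglongrightarrow> g 0" using g(1)[of 0] unfolding y_def .
  then show ?thesis using gd gp s by blast
qed

lemma bounded_on_compact_norm:
  fixes f :: "'a::topological_space \<Rightarrow> 'b::real_normed_vector"
  assumes "continuous_on S f" "compact S"
  obtains B where "B \<ge> 0" "\<And>x. x \<in> S \<Longrightarrow> norm (f x) \<le> B"
proof -
  have "bounded (f ` S)" by (rule compact_imp_bounded[OF compact_continuous_image[OF assms]])
  then obtain a where "\<forall>y\<in>f ` S. norm y \<le> a" unfolding bounded_iff by blast
  then show ?thesis using that[of "max a 0"] by force
qed

lemma phase_choice:
  fixes v0 :: "real \<Rightarrow> 'a::euclidean_space" and v :: "nat \<Rightarrow> real \<Rightarrow> 'a"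
  assumes d0: "(v0 has_vector_derivative \<xi>) (at 0)" and xi: "\<xi> \<noteq> 0"
    and vc: "\<And>k. continuous_on UNIV (v k)"
    and eb: "\<And>k t. norm (v k t - v0 t) \<le> e k" and el: "e \<longlonglongrightarrow> 0"
  obtains \<theta> where "\<theta> \<longlonglongrightarrow> 0" "\<forall>\<^sub>F k in sequentially. (v k (\<theta> k) - v0 0) \<bullet> \<xi> = 0"
proof -
  define c where "c = norm \<xi>"
  have c: "c > 0" using xi unfolding c_def by simp
  have "\<forall>e>0. \<exists>d>0. \<forall>y. norm (y - 0) < d \<longrightarrow> norm (v0 y - v0 0 - y *\<^sub>R \<xi>) \<le> e * norm (y - 0)"
    using conjunct2[OF d0[unfolded has_vector_derivative_def has_derivative_at_alt]] by simp
  from this[rule_format, of "c/2"] c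
  obtain d where d: "d > 0" "\<And>y. norm (y - 0) < d \<Longrightarrow> norm (v0 y - v0 0 - y *\<^sub>R \<xi>) \<le> (c/2) * norm (y - 0)"
    by auto
  have lowup: "\<bar>(v0 y - v0 0) \<bullet> \<xi> - y * c\<^sup>2\<bar> \<le> c\<^sup>2/2 * \<bar>y\<bar>" if "\<bar>y\<bar> < d" for y
  proof -
    have "(v0 y - v0 0) \<bullet> \<xi> - y * c\<^sup>2 = (v0 y - v0 0 - y *\<^sub>R \<xi>) \<bullet> \<xi>"
      unfolding c_def by (simp add: inner_diff_left power2_norm_eq_inner)
    moreover have "\<bar>(v0 y - v0 0 - y *\<^sub>R \<xi>) \<bullet> \<xi>\<bar> \<le> norm (v0 y - v0 0 - y *\<^sub>R \<xi>) * c"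
      unfolding c_def by (rule Cauchy_Schwarz_ineq2)
    ultimately have "\<bar>(v0 y - v0 0) \<bullet> \<xi> - y * c\<^sup>2\<bar> \<le> norm (v0 y - v0 0 - y *\<^sub>R \<xi>) * c"
      by simp
    also have "\<dots> \<le> ((c/2) * \<bar>y\<bar>) * c"
    proof (rule mult_right_mono)
      show "norm (v0 y - v0 0 - y *\<^sub>R \<xi>) \<le> c / 2 * \<bar>y\<bar>" using d(2)[of y] that by simp
    qed (use c in simp)
    finally show ?thesis by (simp add: power2_eq_square algebra_simps)
  qed
  have e0: "e k \<ge> 0" for k using eb[of k 0] norm_ge_zero order_trans by blast
  define \<eta> where "\<eta> k = 4 * e k / c" for k
  have eta0: "\<eta> k \<ge> 0" for k unfolding \<eta>_def using e0 c by simp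
  define G where "G k y = (v k y - v0 0) \<bullet> \<xi>" for k y
  have Gex: "\<exists>y. \<bar>y\<bar> \<le> \<eta> k \<and> G k y = 0" if k: "\<eta> k < d" for k
  proof -
    have err: "\<bar>(v k y - v0 y) \<bullet> \<xi>\<bar> \<le> e k * c" for y
    proof -
      have "\<bar>(v k y - v0 y) \<bullet> \<xi>\<bar> \<le> norm (v k y - v0 y) * c"
        unfolding c_def by (rule Cauchy_Schwarz_ineq2)
      also have "\<dots> \<le> e k * c" by (rule mult_right_mono[OF eb]) (use c in simp)
      finally show ?thesis .
    qed
    have split: "G k y = (v0 y - v0 0) \<bullet> \<xi> + (v k y - v0 y) \<bullet> \<xi>" for y
      unfolding G_def by (simp add: inner_diff_left)
    have ec1: "-\<eta> k * c\<^sup>2 + c\<^sup>2/2 * \<eta> k = -(2 * (e k * c))"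
      unfolding \<eta>_def using c by (simp add: power2_eq_square field_simps)
    have ec2: "\<eta> k * c\<^sup>2 - c\<^sup>2/2 * \<eta> k = 2 * (e k * c)"
      unfolding \<eta>_def using c by (simp add: power2_eq_square field_simps)
    have ek: "\<bar>-\<eta> k\<bar> < d" "\<bar>\<eta> k\<bar> < d" using k eta0[of k] by simp_all
    have "G k (-\<eta> k) \<le> 0"
    proof -
      have h: "\<bar>(v0 (-\<eta> k) - v0 0) \<bullet> \<xi> - (-\<eta> k) * c\<^sup>2\<bar> \<le> c\<^sup>2/2 * \<bar>-\<eta> k\<bar>"
        by (rule lowup[OF ek(1)])
      have "\<bar>-\<eta> k\<bar> = \<eta> k" using eta0[of k] by simp
      then have "(v0 (-\<eta> k) - v0 0) \<bullet> \<xi> \<le> -\<eta> k * c\<^sup>2 + c\<^sup>2/2 * \<eta> k"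
        using abs_le_D1[OF h] by simp
      then show ?thesis using split[of "-\<eta> k"] abs_le_D1[OF err[of "-\<eta> k"]] ec1 mult_nonneg_nonneg[OF e0[of k] less_imp_le[OF c]] by linarith
    qed
    moreover have "G k (\<eta> k) \<ge> 0"
    proof -
      have h: "\<bar>(v0 (\<eta> k) - v0 0) \<bullet> \<xi> - \<eta> k * c\<^sup>2\<bar> \<le> c\<^sup>2/2 * \<bar>\<eta> k\<bar>"
        by (rule lowup[OF ek(2)])
      have "\<bar>\<eta> k\<bar> = \<eta> k" using eta0[of k] by simp
      then have "(v0 (\<eta> k) - v0 0) \<bullet> \<xi> \<ge> \<eta> k * c\<^sup>2 - c\<^sup>2/2 * \<eta> k"
        using abs_le_D2[OF h] by simp
      then show ?thesis using split[of "\<eta> k"] abs_le_D2[OF err[of "\<eta> k"]] ec2 mult_nonneg_nonneg[OF e0[of k] less_imp_le[OF c]] by linarith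
    qed
    moreover have "continuous_on {-\<eta> k..\<eta> k} (G k)"
      unfolding G_def by (intro continuous_on_inner continuous_on_diff continuous_on_const continuous_on_subset[OF vc[of k]]) simp_all
    moreover have "-\<eta> k \<le> \<eta> k" using eta0[of k] by simp
    ultimately have "\<exists>x. -\<eta> k \<le> x \<and> x \<le> \<eta> k \<and> G k x = 0"
      by (intro IVT') 
    then obtain y where "-\<eta> k \<le> y" "y \<le> \<eta> k" "G k y = 0" by blast
    then show ?thesis by (intro exI[of _ y]) auto
  qed
  define \<theta> where "\<theta> k = (if \<eta> k < d then (SOME y. \<bar>y\<bar> \<le> \<eta> k \<and> G k y = 0) else 0)" for k
  have th: "\<bar>\<theta> k\<bar> \<le> \<eta> k \<and> (\<eta> k < d \<longrightarrow> G k (\<theta> k) = 0)" for k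
  proof (cases "\<eta> k < d")
    case True
    then have "\<theta> k = (SOME y. \<bar>y\<bar> \<le> \<eta> k \<and> G k y = 0)" unfolding \<theta>_def by simp
    moreover have "\<bar>SOME y. \<bar>y\<bar> \<le> \<eta> k \<and> G k y = 0\<bar> \<le> \<eta> k \<and> G k (SOME y. \<bar>y\<bar> \<le> \<eta> k \<and> G k y = 0) = 0"
      by (rule someI_ex[OF Gex[OF True]])
    ultimately show ?thesis by simp
  next
    case False
    then show ?thesis unfolding \<theta>_def using eta0[of k] by simp
  qed
  have th1: "\<bar>\<theta> k\<bar> \<le> \<eta> k" for k using th by blast
  have th2: "G k (\<theta> k) = 0" if "\<eta> k < d" for k using th that by blast
  have "(\<lambda>k. 4 * e k) \<longlonglongrightarrow> 0" using tendsto_mult[OF tendsto_const el, of "4"] by simp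
  then have etal: "\<eta> \<longlonglongrightarrow> 0" unfolding \<eta>_def by (rule tendsto_divide_zero)
  have "\<theta> \<longlonglongrightarrow> 0"
    by (rule Lim_null_comparison[OF _ etal]) (use th1 in auto)
  moreover have "\<forall>\<^sub>F k in sequentially. \<eta> k < d"
    using etal d(1) by (simp add: order_tendstoD(2))
  then have "\<forall>\<^sub>F k in sequentially. (v k (\<theta> k) - v0 0) \<bullet> \<xi> = 0"
    by eventually_elim (use th2 in \<open>auto simp: G_def\<close>)
  ultimately show ?thesis using that by blast
qed

lemma linearization:
  fixes F :: "real \<Rightarrow> 'a::euclidean_space \<Rightarrow> 'a" and DF :: "real \<Rightarrow> 'a \<Rightarrow> 'a \<Rightarrow>\<^sub>L 'a"
    and pth :: "real \<Rightarrow> 'a" and u :: "nat \<Rightarrow> real \<Rightarrow> 'a"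
  assumes Lo: "open \<Lambda>" and mu: "\<mu> \<in> \<Lambda>" and lam_in: "\<And>k. lam k \<in> \<Lambda>" and lam_lim: "lam \<longlonglongrightarrow> \<mu>"
    and Fd: "\<And>l x. l \<in> \<Lambda> \<Longrightarrow> (F l has_derivative blinfun_apply (DF l x)) (at x)"
    and DFc: "continuous_on (\<Lambda> \<times> UNIV) (\<lambda>(l, x). DF l x)"
    and R0: "\<And>t. norm (pth t) \<le> R0"
    and ub: "\<And>k t. norm (u k t) \<le> \<sigma> k" and sl: "\<sigma> \<longlonglongrightarrow> 0"
    and eta: "\<eta> > 0"
  shows "\<forall>\<^sub>F k in sequentially. \<forall>t. norm (F (lam k) (pth t + u k t) - F (lam k) (pth t) - DF \<mu> (pth t) (u k t)) \<le> \<eta> * norm (u k t)"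
proof -
  obtain dl where dl: "dl > 0" "cball \<mu> dl \<subseteq> \<Lambda>" using Lo mu open_contains_cball by blast
  define K where "K = cball \<mu> dl \<times> cball (0::'a) (R0 + 1)"
  have KL: "K \<subseteq> \<Lambda> \<times> UNIV" unfolding K_def using dl by auto
  have "uniformly_continuous_on K (\<lambda>(l, x). DF l x)"
    by (rule compact_uniformly_continuous[OF continuous_on_subset[OF DFc KL]]) (simp add: K_def compact_Times)
  then obtain \<delta> where \<delta>: "\<delta> > 0" "\<And>p q. p \<in> K \<Longrightarrow> q \<in> K \<Longrightarrow> dist q p < \<delta> \<Longrightarrow> dist ((\<lambda>(l, x). DF l x) q) ((\<lambda>(l, x). DF l x) p) < \<eta>/2"
    unfolding uniformly_continuous_on_def using eta by (metis half_gt_zero)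
  define r where "r = min \<delta> 1"
  have r: "r > 0" "r \<le> \<delta>" "r \<le> 1" unfolding r_def using \<delta> by auto
  have ev1: "\<forall>\<^sub>F k in sequentially. dist (lam k) \<mu> < min r dl"
    using lam_lim r dl unfolding tendsto_iff by (meson min_less_iff_conj)
  have ev2: "\<forall>\<^sub>F k in sequentially. \<sigma> k < r"
    using sl r by (simp add: order_tendstoD(2))
  show ?thesis using ev1 ev2
  proof eventually_elim
    case (elim k)
    show ?case
    proof
      fix t
      define a where "a = pth t"
      define h where "h = u k t"
      have hr: "norm h < r" using ub[of k t] elim(2) unfolding h_def by simp
      have lk: "lam k \<in> \<Lambda>" by (rule lam_in)
      have lkK: "dist (lam k) \<mu> < dl" "dist (lam k) \<mu> < \<delta>" using elim(1) r by auto
      define S where "S = ball a r"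
      have inK: "(lam k, y) \<in> K" if "y \<in> S" for y
      proof -
        have "norm y \<le> norm a + norm (y - a)" by (metis add_diff_cancel_left' norm_triangle_ineq add.commute diff_add_cancel)
        also have "\<dots> \<le> R0 + 1" using R0[of t] that r unfolding S_def a_def by (simp add: dist_norm norm_minus_commute)
        finally show ?thesis unfolding K_def using lkK by (simp add: dist_commute)
      qed
      have aS: "a \<in> S" unfolding S_def using r by simp
      have "norm (F (lam k) (a + h) - F (lam k) a - DF (lam k) a ((a + h) - a)) \<le> norm ((a + h) - a) * (\<eta>/2)"
      proof (rule differentiable_bound_linearization[where S = S and f' = "\<lambda>x. blinfun_apply (DF (lam k) x)"])
        show "a + s *\<^sub>R (a + h - a) \<in> S" if "s \<in> {0..1}" for s
        proof -
          have "norm (s *\<^sub>R h) \<le> norm h" using that by (simp add: mult_left_le_one_le)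
          then show ?thesis unfolding S_def using hr by (simp add: dist_norm)
        qed
        show "(F (lam k) has_derivative blinfun_apply (DF (lam k) x)) (at x within S)" for x
          by (rule has_derivative_at_withinI[OF Fd[OF lk]])
        show "onorm (blinfun_apply (DF (lam k) x) - blinfun_apply (DF (lam k) a)) \<le> \<eta>/2" if "x \<in> S" for x
        proof -
          have "dist (lam k, x) (lam k, a) < \<delta>"
            using that r unfolding S_def by (simp add: dist_Pair_Pair dist_commute)
          then have "dist (DF (lam k) x) (DF (lam k) a) < \<eta>/2"
            using \<delta>(2)[OF inK[OF aS] inK[OF that]] by simp
          then show ?thesis
            by (simp add: dist_norm norm_blinfun.rep_eq minus_blinfun.rep_eq fun_diff_def)
        qed
      qed (rule aS)
      then have 1: "norm (F (lam k) (a + h) - F (lam k) a - DF (lam k) a h) \<le> \<eta>/2 * norm h"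
        by (simp add: mult.commute)
      have "dist (lam k, a) (\<mu>, a) < \<delta>" using lkK by (simp add: dist_Pair_Pair)
      moreover have "(\<mu>, a) \<in> K" using inK[OF aS] dl R0[of t] unfolding K_def a_def by simp
      ultimately have "dist (DF (lam k) a) (DF \<mu> a) < \<eta>/2"
        using \<delta>(2)[OF inK[OF aS], of "(\<mu>, a)"] by (simp add: dist_commute)
      then have "norm (DF (lam k) a - DF \<mu> a) \<le> \<eta>/2" by (simp add: dist_norm)
      then have "norm (DF (lam k) a - DF \<mu> a) * norm h \<le> \<eta>/2 * norm h"
        by (rule mult_right_mono) simp
      then have 2: "norm (DF (lam k) a h - DF \<mu> a h) \<le> \<eta>/2 * norm h"
        using norm_blinfun[of "DF (lam k) a - DF \<mu> a" h]
        by (simp add: blinfun.diff_left)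
      have "norm (F (lam k) (a + h) - F (lam k) a - DF \<mu> a h)
          \<le> norm (F (lam k) (a + h) - F (lam k) a - DF (lam k) a h) + norm (DF (lam k) a h - DF \<mu> a h)"
        by (rule order_trans[OF _ norm_triangle_ineq]) (simp add: algebra_simps)
      also have "\<dots> \<le> \<eta> * norm h" using 1 2 by simp
      finally show "norm (F (lam k) (pth t + u k t) - F (lam k) (pth t) - DF \<mu> (pth t) (u k t)) \<le> \<eta> * norm (u k t)"
        unfolding a_def h_def .
    qed
  qed
qed

lemma core:
  fixes F :: "real \<Rightarrow> 'a::euclidean_space \<Rightarrow> 'a" and DF :: "real \<Rightarrow> 'a \<Rightarrow> 'a \<Rightarrow>\<^sub>L 'a"
    and v0 :: "real \<Rightarrow> 'a" and v :: "nat \<Rightarrow> real \<Rightarrow> 'a" and M :: "'a \<Rightarrow> 'a"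
  assumes tau: "\<tau> > 0" and M: "orthogonal_transformation M"
    and Lo: "open \<Lambda>" and mu: "\<mu> \<in> \<Lambda>" and lam_in: "\<And>k. lam k \<in> \<Lambda>" and lam_lim: "lam \<longlonglongrightarrow> \<mu>"
    and Fd: "\<And>l x. l \<in> \<Lambda> \<Longrightarrow> (F l has_derivative blinfun_apply (DF l x)) (at x)"
    and DFc: "continuous_on (\<Lambda> \<times> UNIV) (\<lambda>(l, x). DF l x)"
    and v0_nonconst: "\<exists>s t. v0 s \<noteq> v0 t"
    and v0_sol: "\<And>l t. l \<in> \<Lambda> \<Longrightarrow> (v0 has_vector_derivative F l (v0 t)) (at t)"
    and v0_per: "\<And>t. v0 (t + \<tau>) = M (v0 t)"
    and v_sol: "\<And>k t. (v k has_vector_derivative F (lam k) (v k t)) (at t)"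
    and v_per: "\<And>k t. v k (t + \<tau>) = M (v k t)"
    and v_distinct: "\<And>i j. i \<noteq> j \<Longrightarrow> R_distinct (v i) (v j)"
    and eb: "\<And>k t. norm (v k t - v0 t) \<le> e k" and el: "e \<longlonglongrightarrow> 0"
  shows "F \<mu> (v0 0) \<noteq> 0 \<and> (\<exists>w. (\<forall>t. (w has_vector_derivative DF \<mu> (v0 t) (w t)) (at t))
            \<and> (\<forall>t. w (t + \<tau>) = M (w t)) \<and> w 0 \<noteq> 0 \<and> w 0 \<bullet> F \<mu> (v0 0) = 0)"
proof -
  have Mlin: "linear M" using M by (simp add: orthogonal_transformation_def)
  have v0c: "continuous_on UNIV v0"
    using v0_sol[OF mu] by (intro continuous_at_imp_continuous_on) (auto intro: has_vector_derivative_continuous)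
  have vc: "continuous_on UNIV (v k)" for k
    using v_sol by (intro continuous_at_imp_continuous_on) (auto intro: has_vector_derivative_continuous)
  have e0: "e k \<ge> 0" for k using eb[of k 0] norm_ge_zero order_trans by blast
  obtain B where B: "B \<ge> 0" "\<And>x. x \<in> {0..\<tau>} \<Longrightarrow> norm (v0 x) \<le> B"
    using bounded_on_compact_norm[OF continuous_on_subset[OF v0c] compact_Icc] by blast
  have R0: "norm (v0 t) \<le> B" for t
  proof -
    obtain s where "s \<in> {0..\<tau>}" "norm (v0 t) = norm (v0 s)"
      using qp_norm_reduce[where u=v0, OF M tau v0_per] by blast
    then show ?thesis using B by simp
  qed
  have DFlc: "continuous_on UNIV (DF l)" if l: "l \<in> \<Lambda>" for l
  proof -
    have "continuous_on UNIV (\<lambda>x. (\<lambda>(l, x). DF l x) (l, x))"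
      by (rule continuous_on_compose2[OF DFc]) (use l in \<open>auto intro!: continuous_intros\<close>)
    then show ?thesis by simp
  qed
  have Fc: "continuous_on UNIV (F l)" if l: "l \<in> \<Lambda>" for l
    using Fd[OF l] by (intro continuous_at_imp_continuous_on) (auto intro: has_derivative_continuous)
  define \<xi> where "\<xi> = F \<mu> (v0 0)"
  have xi: "\<xi> \<noteq> 0"
  proof
    assume x0: "\<xi> = 0"
    have c: "((\<lambda>_. v0 0) has_vector_derivative F \<mu> ((\<lambda>_. v0 0) t)) (at t)" for t
      using x0 unfolding \<xi>_def by (simp add: has_vector_derivative_const)
    have "v0 t = v0 0" for t
      using ode_unique[OF Fd[OF mu] DFlc[OF mu] v0_sol[OF mu] c R0, of 0 t] R0[of 0] by simp
    then show False using v0_nonconst by metis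
  qed
  obtain \<theta> where th: "\<theta> \<longlonglongrightarrow> 0" and th0: "\<forall>\<^sub>F k in sequentially. (v k (\<theta> k) - v0 0) \<bullet> \<xi> = 0"
    using phase_choice[OF v0_sol[OF mu, of 0] _ vc eb el] xi unfolding \<xi>_def by blast
  obtain L0 where L0: "L0 \<ge> 0" "\<And>x. x \<in> cball 0 B \<Longrightarrow> norm (F \<mu> x) \<le> L0"
    using bounded_on_compact_norm[OF continuous_on_subset[OF Fc[OF mu]] compact_cball] by blast
  have v0lip: "norm (v0 (a + t) - v0 t) \<le> L0 * \<bar>a\<bar>" for a t
  proof -
    have "norm (v0 (a + t) - v0 t) \<le> L0 * norm ((a + t) - t)"
    proof (rule differentiable_bound[of UNIV v0 "\<lambda>x h. h *\<^sub>R F \<mu> (v0 x)" L0])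
      show "(v0 has_derivative (\<lambda>h. h *\<^sub>R F \<mu> (v0 x))) (at x within UNIV)" for x
        using v0_sol[OF mu, of x] unfolding has_vector_derivative_def by simp
      show "onorm (\<lambda>h. h *\<^sub>R F \<mu> (v0 x)) \<le> L0" for x
      proof (rule onorm_le)
        fix h :: real
        have "norm (F \<mu> (v0 x)) \<le> L0" using L0(2) R0[of x] by simp
        then show "norm (h *\<^sub>R F \<mu> (v0 x)) \<le> L0 * norm h"
          by (simp add: mult.commute[of L0] mult_left_mono)
      qed
    qed auto
    then show ?thesis by simp
  qed
  define u where "u k t = v k (\<theta> k + t) - v0 t" for k t
  define \<sigma> where "\<sigma> k = e k + L0 * \<bar>\<theta> k\<bar>" for k
  have ub: "norm (u k t) \<le> \<sigma> k" for k t
  proof -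
    have "u k t = (v k (\<theta> k + t) - v0 (\<theta> k + t)) + (v0 (\<theta> k + t) - v0 t)" unfolding u_def by simp
    then have "norm (u k t) \<le> norm (v k (\<theta> k + t) - v0 (\<theta> k + t)) + norm (v0 (\<theta> k + t) - v0 t)"
      by (metis norm_triangle_ineq)
    also have "\<dots> \<le> e k + L0 * \<bar>\<theta> k\<bar>" by (rule add_mono[OF eb v0lip])
    finally show ?thesis unfolding \<sigma>_def .
  qed
  have sl: "\<sigma> \<longlonglongrightarrow> 0"
  proof -
    have "\<sigma> \<longlonglongrightarrow> 0 + L0 * \<bar>0\<bar>" unfolding \<sigma>_def by (intro tendsto_intros el th)
    then show ?thesis by simp
  qed
  have ud: "(u k has_vector_derivative F (lam k) (v0 t + u k t) - F (lam k) (v0 t)) (at t)" for k t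
  proof -
    have "((v k \<circ> (\<lambda>t. \<theta> k + t)) has_vector_derivative 1 *\<^sub>R F (lam k) (v k (\<theta> k + t))) (at t)"
      by (rule vector_diff_chain_at) (auto intro!: derivative_eq_intros v_sol)
    then have "((\<lambda>t. v k (\<theta> k + t)) has_vector_derivative F (lam k) (v k (\<theta> k + t))) (at t)"
      by (simp add: o_def)
    from has_vector_derivative_diff[OF this v0_sol[OF lam_in]]
    show ?thesis unfolding u_def by simp
  qed
  have up: "u k (t + \<tau>) = M (u k t)" for k t
  proof -
    have "v k (\<theta> k + (t + \<tau>)) = M (v k (\<theta> k + t))" using v_per[of k "\<theta> k + t"] by (simp add: add.assoc)
    then show ?thesis unfolding u_def using v0_per linear_diff[OF Mlin] by simp
  qed
  have shift: "v k t = v0 (t - \<theta> k)" if z: "u k 0 = 0" for k t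
  proof -
    have y: "((\<lambda>t. v k (\<theta> k + t)) has_vector_derivative F (lam k) ((\<lambda>t. v k (\<theta> k + t)) t)) (at t)" for t
    proof -
      have "((v k \<circ> (\<lambda>t. \<theta> k + t)) has_vector_derivative 1 *\<^sub>R F (lam k) (v k (\<theta> k + t))) (at t)"
        by (rule vector_diff_chain_at) (auto intro!: derivative_eq_intros v_sol)
      then show ?thesis by (simp add: o_def)
    qed
    have yb: "norm (v k (\<theta> k + t)) \<le> B + e k" for t
    proof -
      have "norm (v k (\<theta> k + t)) \<le> norm (v0 (\<theta> k + t)) + norm (v k (\<theta> k + t) - v0 (\<theta> k + t))"
        by (metis add.commute diff_add_cancel norm_triangle_ineq)
      then show ?thesis using R0[of "\<theta> k + t"] eb[of k "\<theta> k + t"] by simp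
    qed
    have zb: "norm (v0 t) \<le> B + e k" for t using R0[of t] e0[of k] by linarith
    have "v k (\<theta> k + s) = v0 s" for s
      using ode_unique[OF Fd[OF lam_in] DFlc[OF lam_in] y v0_sol[OF lam_in] yb zb, of 0 s] z
      unfolding u_def by simp
    from this[of "t - \<theta> k"] show ?thesis by simp
  qed
  have notboth: "\<not> (u k 0 = 0 \<and> u j 0 = 0)" if kj: "k \<noteq> j" for k j
  proof
    assume h: "u k 0 = 0 \<and> u j 0 = 0"
    have "v k = (\<lambda>t. v j ((\<theta> j - \<theta> k) + t))"
    proof
      fix t
      show "v k t = v j ((\<theta> j - \<theta> k) + t)"
        using shift[of k t] shift[of j "(\<theta> j - \<theta> k) + t"] h by simp
    qed
    then show False using v_distinct[OF kj] unfolding R_distinct_def by blast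
  qed
  obtain N0 where N0: "\<And>k. k \<ge> N0 \<Longrightarrow> u k 0 \<noteq> 0"
  proof (cases "\<exists>k0. u k0 0 = 0")
    case True
    then obtain k0 where k0: "u k0 0 = 0" by blast
    show ?thesis using that[of "Suc k0"] notboth[of _ k0] k0 by force
  next
    case False
    then show ?thesis using that[of 0] by blast
  qed
  obtain N1 where N1: "\<And>k. k \<ge> N1 \<Longrightarrow> (v k (\<theta> k) - v0 0) \<bullet> \<xi> = 0"
    using th0 unfolding eventually_sequentially by blast
  define N where "N = max N0 N1"
  have uN: "u (k + N) 0 \<noteq> 0" "u (k + N) 0 \<bullet> \<xi> = 0" for k
    using N0[of "k + N"] N1[of "k + N"] unfolding N_def u_def by auto
  obtain KA where KA: "KA \<ge> 0" "\<And>x. x \<in> cball 0 B \<Longrightarrow> norm (DF \<mu> x) \<le> KA"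
    using bounded_on_compact_norm[OF continuous_on_subset[OF DFlc[OF mu]] compact_cball] by blast
  define A where "A t = DF \<mu> (v0 t)" for t
  have KA': "norm (A t) \<le> KA" for t unfolding A_def using KA(2) R0[of t] by simp
  define \<rho> where "\<rho> k = norm (u (k + N) 0)" for k
  have rho: "\<rho> k > 0" for k unfolding \<rho>_def using uN(1) by simp
  define z where "z k t = (1 / \<rho> k) *\<^sub>R u (k + N) t" for k t
  define r where "r k t = (1 / \<rho> k) *\<^sub>R (F (lam (k + N)) (v0 t + u (k + N) t) - F (lam (k + N)) (v0 t)) - A t (z k t)" for k t
  have zd: "(z k has_vector_derivative (A t (z k t) + r k t)) (at t)" for k t
  proof -
    have "(z k has_vector_derivative (1 / \<rho> k) *\<^sub>R (F (lam (k + N)) (v0 t + u (k + N) t) - F (lam (k + N)) (v0 t))) (at t)"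
      unfolding z_def by (rule bounded_linear.has_vector_derivative[OF bounded_linear_scaleR_right ud])
    then show ?thesis unfolding r_def by simp
  qed
  have zp: "z k (t + \<tau>) = M (z k t)" for k t
    unfolding z_def using up linear_cmul[OF Mlin] by simp
  have z0: "norm (z k 0) = 1" for k
    unfolding z_def using rho[of k] unfolding \<rho>_def by simp
  have rb: "\<forall>\<^sub>F k in sequentially. \<forall>t. norm (r k t) \<le> \<eta> * norm (z k t)" if eta: "\<eta> > 0" for \<eta>
  proof -
    obtain N2 where N2: "\<And>k t. k \<ge> N2 \<Longrightarrow> norm (F (lam k) (v0 t + u k t) - F (lam k) (v0 t) - DF \<mu> (v0 t) (u k t)) \<le> \<eta> * norm (u k t)"
      using linearization[where F=F and DF=DF and pth=v0 and u=u and \<sigma>=\<sigma> and lam=lam, OF Lo mu lam_in lam_lim Fd DFc R0 ub sl eta] unfolding eventually_sequentially by blast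
    show ?thesis unfolding eventually_sequentially
    proof (intro exI allI impI)
      fix k t assume k: "N2 \<le> k"
      have "r k t = (1 / \<rho> k) *\<^sub>R (F (lam (k + N)) (v0 t + u (k + N) t) - F (lam (k + N)) (v0 t) - A t (u (k + N) t))"
        unfolding r_def z_def by (simp add: blinfun.scaleR_right scaleR_diff_right)
      then have "norm (r k t) = (1 / \<rho> k) * norm (F (lam (k + N)) (v0 t + u (k + N) t) - F (lam (k + N)) (v0 t) - A t (u (k + N) t))"
        using rho[of k] by simp
      also have "\<dots> \<le> (1 / \<rho> k) * (\<eta> * norm (u (k + N) t))"
        using N2[of "k + N" t] k rho[of k] unfolding A_def by (intro mult_left_mono) auto
      also have "\<dots> = \<eta> * norm (z k t)"
        unfolding z_def using rho[of k] by simp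
      finally show "norm (r k t) \<le> \<eta> * norm (z k t)" .
    qed
  qed
  obtain w s where w: "\<And>t. (w has_vector_derivative A t (w t)) (at t)" "\<And>t. w (t + \<tau>) = M (w t)"
    and s: "(\<lambda>k. z (s k) 0) \<longlonglongrightarrow> w 0"
    using limit_solution[OF tau M KA' zd zp z0 rb] by blast
  have "(\<lambda>k. norm (z (s k) 0)) \<longlonglongrightarrow> norm (w 0)" by (intro tendsto_intros s)
  then have "norm (w 0) = 1" using z0 LIMSEQ_unique[OF _ tendsto_const] by simp
  then have w0: "w 0 \<noteq> 0" by auto
  have "(\<lambda>k. z (s k) 0 \<bullet> \<xi>) \<longlonglongrightarrow> w 0 \<bullet> \<xi>" by (intro tendsto_intros s)
  moreover have "z (s k) 0 \<bullet> \<xi> = 0" for k unfolding z_def using uN(2) by simp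
  ultimately have wxi: "w 0 \<bullet> \<xi> = 0" using LIMSEQ_unique[OF _ tendsto_const] by simp
  show ?thesis using xi w w0 wxi unfolding A_def \<xi>_def by blast
qed

lemma Jsymp_linear: "linear Jsymp"
  by (rule linearI) (auto simp: Jsymp_def)

lemma Jsymp_bl: "bounded_linear Jsymp"
  using Jsymp_linear by (simp add: linear_conv_bounded_linear)

lemma Jsymp_norm: "norm (Jsymp z) = norm z"
  by (cases z) (simp add: Jsymp_def norm_Pair add.commute)

lemma Jsymp_zero: "Jsymp z = 0 \<longleftrightarrow> z = 0"
  using Jsymp_norm[of z] by (metis norm_eq_zero)

theorem theorem5p5:
  fixes \<tau> \<mu> :: real
    and M :: "((real^'n) \<times> (real^'n)) \<Rightarrow> ((real^'n) \<times> (real^'n))"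
    and \<Lambda> :: "real set"
    and H :: "real \<Rightarrow> ((real^'n) \<times> (real^'n)) \<Rightarrow> real"
    and gradH :: "real \<Rightarrow> ((real^'n) \<times> (real^'n)) \<Rightarrow> ((real^'n) \<times> (real^'n))"
    and hessH :: "real \<Rightarrow> ((real^'n) \<times> (real^'n)) \<Rightarrow> (((real^'n) \<times> (real^'n)) \<Rightarrow>\<^sub>L ((real^'n) \<times> (real^'n)))"
    and v0 :: "real \<Rightarrow> ((real^'n) \<times> (real^'n))"
    and lam :: "nat \<Rightarrow> real"
    and v :: "nat \<Rightarrow> real \<Rightarrow> ((real^'n) \<times> (real^'n))"
  assumes tau_pos: "\<tau> > 0"
    and M_symp: "symplectic M"
    and M_orth: "orthogonal_transformation M"
    and Lambda_int: "is_interval \<Lambda>" "open \<Lambda>" "\<Lambda> \<noteq> {}"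
    and H_cont: "continuous_on (\<Lambda> \<times> UNIV) (\<lambda>(l, z). H l z)"
    and H_inv: "\<And>l z. l \<in> \<Lambda> \<Longrightarrow> H l (M z) = H l z"
    and H_grad: "\<And>l z. l \<in> \<Lambda> \<Longrightarrow> (H l has_derivative (\<lambda>h. gradH l z \<bullet> h)) (at z)"
    and H_hess: "\<And>l z. l \<in> \<Lambda> \<Longrightarrow> (gradH l has_derivative blinfun_apply (hessH l z)) (at z)"
    and grad_cont: "continuous_on (\<Lambda> \<times> UNIV) (\<lambda>(l, z). gradH l z)"
    and hess_cont: "continuous_on (\<Lambda> \<times> UNIV) (\<lambda>(l, z). hessH l z)"
    and v0_nonconst: "\<exists>s t. v0 s \<noteq> v0 t"
    and v0_sol: "\<And>l t. l \<in> \<Lambda> \<Longrightarrow> (v0 has_vector_derivative Jsymp (gradH l (v0 t))) (at t)"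
    and v0_per: "\<And>t. v0 (t + \<tau>) = M (v0 t)"
    and mu_in: "\<mu> \<in> \<Lambda>"
    and lam_in: "\<And>k. lam k \<in> \<Lambda>"
    and lam_lim: "lam \<longlonglongrightarrow> \<mu>"
    and v_sol: "\<And>k t. (v k has_vector_derivative Jsymp (gradH (lam k) (v k t))) (at t)"
    and v_per: "\<And>k t. v k (t + \<tau>) = M (v k t)"
    and v_distinct: "\<And>i j. i \<noteq> j \<Longrightarrow> R_distinct (v i) (v j)"
    and v_conv: "(\<lambda>k. integral {0..\<tau>} (\<lambda>t. (norm (v k t - v0 t))\<^sup>2)
                   + integral {0..\<tau>} (\<lambda>t. (norm (vector_derivative (v k) (at t)
                                                 - vector_derivative v0 (at t)))\<^sup>2))
                 \<longlonglongrightarrow> 0"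
  shows "\<exists>w1 w2 :: real \<Rightarrow> ((real^'n) \<times> (real^'n)).
           (\<forall>t. (w1 has_vector_derivative Jsymp (hessH \<mu> (v0 t) (w1 t))) (at t)) \<and>
           (\<forall>t. w1 (t + \<tau>) = M (w1 t)) \<and>
           (\<forall>t. (w2 has_vector_derivative Jsymp (hessH \<mu> (v0 t) (w2 t))) (at t)) \<and>
           (\<forall>t. w2 (t + \<tau>) = M (w2 t)) \<and>
           (\<forall>a b :: real. (\<forall>t. a *\<^sub>R w1 t + b *\<^sub>R w2 t = 0) \<longrightarrow> a = 0 \<and> b = 0)"
proof -
  define F where "F l x = Jsymp (gradH l x)" for l x
  define Jb :: "((real^'n) \<times> (real^'n)) \<Rightarrow>\<^sub>L ((real^'n) \<times> (real^'n))" where "Jb = Blinfun Jsymp"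
  have Jb: "blinfun_apply Jb = Jsymp" unfolding Jb_def by (rule bounded_linear_Blinfun_apply[OF Jsymp_bl])
  define DF where "DF l x = Jb o\<^sub>L hessH l x" for l x
  have Mlin: "linear M" using M_orth by (simp add: orthogonal_transformation_def)
  have Mbl: "bounded_linear M" using Mlin by (simp add: linear_conv_bounded_linear)
  have Fd: "(F l has_derivative blinfun_apply (DF l x)) (at x)" if l: "l \<in> \<Lambda>" for l x
  proof -
    have "((\<lambda>x. Jsymp (gradH l x)) has_derivative (\<lambda>h. Jsymp (hessH l x h))) (at x)"
      by (rule bounded_linear.has_derivative[OF Jsymp_bl H_hess[OF l]])
    moreover have "blinfun_apply (Jb o\<^sub>L hessH l x) = (\<lambda>h. Jsymp (hessH l x h))"
      by (rule ext) (simp add: Jb)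
    ultimately show ?thesis unfolding F_def DF_def by simp
  qed
  have DFc: "continuous_on (\<Lambda> \<times> UNIV) (\<lambda>(l, x). DF l x)"
  proof -
    have "continuous_on (\<Lambda> \<times> UNIV) (\<lambda>p. Jb o\<^sub>L (\<lambda>(l, x). hessH l x) p)"
      by (rule bounded_linear.continuous_on[OF bounded_bilinear.bounded_linear_right[OF bounded_bilinear_blinfun_compose] hess_cont])
    moreover have "(\<lambda>p. Jb o\<^sub>L (\<lambda>(l, x). hessH l x) p) = (\<lambda>(l, x). DF l x)"
      unfolding DF_def by (auto simp: fun_eq_iff)
    ultimately show ?thesis by metis
  qed
  have gc: "continuous_on UNIV (gradH l)" if l: "l \<in> \<Lambda>" for l
    using H_hess[OF l] by (intro continuous_at_imp_continuous_on) (auto intro: has_derivative_continuous)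
  define S where "S k = integral {0..\<tau>} (\<lambda>t. (norm (v k t - v0 t))\<^sup>2)
                   + integral {0..\<tau>} (\<lambda>t. (norm (vector_derivative (v k) (at t) - vector_derivative v0 (at t)))\<^sup>2)" for k
  define e where "e k = sqrt ((1/\<tau> + 1) * S k)" for k
  have eb: "norm (v k t - v0 t) \<le> e k" for k t
  proof -
    define u where "u t = v k t - v0 t" for t
    define u' where "u' t = Jsymp (gradH (lam k) (v k t)) - Jsymp (gradH (lam k) (v0 t))" for t
    have ud: "(u has_vector_derivative u' t) (at t)" for t
      unfolding u_def u'_def by (rule has_vector_derivative_diff[OF v_sol v0_sol[OF lam_in]])
    have vdu: "vector_derivative (v k) (at t) - vector_derivative v0 (at t) = u' t" for t
      using vector_derivative_at[OF v_sol[of k t]] vector_derivative_at[OF v0_sol[OF lam_in, of k t]]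
      unfolding u'_def by simp
    have vc: "continuous_on UNIV (v k)"
      using v_sol by (intro continuous_at_imp_continuous_on) (auto intro: has_vector_derivative_continuous)
    have v0c: "continuous_on UNIV v0"
      using v0_sol[OF mu_in] by (intro continuous_at_imp_continuous_on) (auto intro: has_vector_derivative_continuous)
    have cu': "continuous_on {0..\<tau>} u'"
      unfolding u'_def
      by (intro continuous_on_diff bounded_linear.continuous_on[OF Jsymp_bl]
            continuous_on_compose2[OF gc[OF lam_in] continuous_on_subset[OF vc]]
            continuous_on_compose2[OF gc[OF lam_in] continuous_on_subset[OF v0c]]) auto
    have Su: "S k = integral {0..\<tau>} (\<lambda>t. (norm (u t))\<^sup>2) + integral {0..\<tau>} (\<lambda>t. (norm (u' t))\<^sup>2)"
      unfolding S_def u_def using vdu by simp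
    have up: "u (t + \<tau>) = M (u t)" for t
      unfolding u_def using v_per v0_per linear_diff[OF Mlin] by simp
    obtain s where s: "s \<in> {0..\<tau>}" "norm (u t) = norm (u s)"
      using qp_norm_reduce[where u=u, OF M_orth tau_pos up] by blast
    have "(norm (u s))\<^sup>2 \<le> (1/\<tau> + 1) * S k"
      unfolding Su by (rule w12_sup[OF tau_pos ud cu' s(1)])
    then have "norm (u s) \<le> e k" unfolding e_def by (rule real_le_rsqrt)
    then show ?thesis using s(2) unfolding u_def by simp
  qed
  have el: "e \<longlonglongrightarrow> 0"
  proof -
    have "e \<longlonglongrightarrow> sqrt ((1/\<tau> + 1) * 0)"
      unfolding e_def using v_conv unfolding S_def[symmetric]
      by (intro tendsto_intros) (simp add: S_def)
    then show ?thesis by simp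
  qed
  have core_res: "F \<mu> (v0 0) \<noteq> 0 \<and> (\<exists>w. (\<forall>t. (w has_vector_derivative DF \<mu> (v0 t) (w t)) (at t))
            \<and> (\<forall>t. w (t + \<tau>) = M (w t)) \<and> w 0 \<noteq> 0 \<and> w 0 \<bullet> F \<mu> (v0 0) = 0)"
    by (rule core[where F=F and DF=DF and \<Lambda>=\<Lambda> and lam=lam and v=v and e=e,
          OF tau_pos M_orth Lambda_int(2) mu_in lam_in lam_lim Fd DFc v0_nonconst _ v0_per _ v_per v_distinct eb el])
       (auto simp: F_def intro: v0_sol v_sol)
  then obtain w where xi: "F \<mu> (v0 0) \<noteq> 0"
    and wd: "\<And>t. (w has_vector_derivative DF \<mu> (v0 t) (w t)) (at t)"
    and wp: "\<And>t. w (t + \<tau>) = M (w t)" and w0: "w 0 \<noteq> 0" and wxi: "w 0 \<bullet> F \<mu> (v0 0) = 0"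
    by blast
  define w1 where "w1 t = Jsymp (gradH \<mu> (v0 t))" for t
  have w1d: "(w1 has_vector_derivative Jsymp (hessH \<mu> (v0 t) (w1 t))) (at t)" for t
  proof -
    have v0d: "(v0 has_derivative (\<lambda>h. h *\<^sub>R w1 t)) (at t)"
      using v0_sol[OF mu_in, of t] unfolding has_vector_derivative_def w1_def .
    have "((gradH \<mu> \<circ> v0) has_derivative (blinfun_apply (hessH \<mu> (v0 t)) \<circ> (\<lambda>h. h *\<^sub>R w1 t))) (at t)"
      by (rule diff_chain_at[OF v0d H_hess[OF mu_in]])
    then have "((\<lambda>t. gradH \<mu> (v0 t)) has_derivative (\<lambda>h. h *\<^sub>R hessH \<mu> (v0 t) (w1 t))) (at t)"
      by (simp add: o_def blinfun.scaleR_right)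
    then have "((\<lambda>t. gradH \<mu> (v0 t)) has_vector_derivative hessH \<mu> (v0 t) (w1 t)) (at t)"
      unfolding has_vector_derivative_def .
    from bounded_linear.has_vector_derivative[OF Jsymp_bl this]
    show ?thesis unfolding w1_def .
  qed
  have w1p: "w1 (t + \<tau>) = M (w1 t)" for t
  proof -
    have "((v0 \<circ> (\<lambda>t. t + \<tau>)) has_vector_derivative 1 *\<^sub>R w1 (t + \<tau>)) (at t)"
      by (rule vector_diff_chain_at) (auto intro!: derivative_eq_intros simp: w1_def intro: v0_sol[OF mu_in])
    then have a: "((\<lambda>t. v0 (t + \<tau>)) has_vector_derivative w1 (t + \<tau>)) (at t)" by (simp add: o_def)
    have b: "((\<lambda>t. M (v0 t)) has_vector_derivative M (w1 t)) (at t)"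
      by (rule bounded_linear.has_vector_derivative[OF Mbl]) (simp add: w1_def v0_sol[OF mu_in])
    have "(\<lambda>t. v0 (t + \<tau>)) = (\<lambda>t. M (v0 t))" using v0_per by auto
    then show ?thesis using a b vector_derivative_unique_at by metis
  qed
  have indep: "a = 0 \<and> b = 0" if h: "\<forall>t. a *\<^sub>R w1 t + b *\<^sub>R w t = 0" for a b
  proof -
    have h0: "a *\<^sub>R F \<mu> (v0 0) + b *\<^sub>R w 0 = 0" using h[rule_format, of 0] unfolding w1_def F_def .
    then have "(a *\<^sub>R F \<mu> (v0 0) + b *\<^sub>R w 0) \<bullet> F \<mu> (v0 0) = 0" by simp
    then have "a * (F \<mu> (v0 0) \<bullet> F \<mu> (v0 0)) = 0" using wxi by (simp add: inner_add_left)
    then have a0: "a = 0" using xi by simp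
    then have "b *\<^sub>R w 0 = 0" using h0 by simp
    then have "b = 0" using w0 by simp
    with a0 show ?thesis by simp
  qed
  have wd': "(w has_vector_derivative Jsymp (hessH \<mu> (v0 t) (w t))) (at t)" for t
    using wd[of t] unfolding DF_def by (simp add: Jb)
  show ?thesis
    apply (rule exI[of _ w1], rule exI[of _ w])
    using w1d w1p wd' wp indep by blast
qed

end
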